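(* For every finite simple digraph $G$, ${\sf dtw}(G) \leq {\sf circ}(G) + 1$, where ${\sf dtw}(G)$ is the directed treewidth of $G$ and ${\sf circ}(G)$ is its circumference.
   Context: All digraphs are finite and simple (no loops, no multiple arcs). The circumference ${\sf circ}(G)$ of a digraph $G$ is the length (number of arcs) of a longest simple directed cycle in $G$; if $G$ is acyclic (a DAG), ${\sf circ}(G)$ is defined to be $1$. An arborescence is a DAG $T$ with a unique root $r$ (node with no incoming arcs) such that for every node $i$ there is a unique directed walk from $r$ to $i$. For distinct nodes $i,j$ of $T$ write $i \prec j$ if there is a directed walk in $T$ from $i$ to $j$, and $i \preceq j$ if $i=j$ or $i\prec j$. For an arc $e=(i,j)$ of $T$ and a node $k$, write $e \prec k$ if $j=k$ or $j \prec k$; write $e \sim i$ if $e$ is incident with $i$. Given sets $W_i$ for nodes $i$, let $W_{\succ e}=\bigcup_{k: e\prec k} W_k$; given sets $A_e$ for arcs $e$, let $A_{\sim i}=\bigcup_{e\sim i}A_e$. For $W,X\subseteq V(G)$, $W$ is $X$-normal if $W\cap X=\emptyset$ and there is no directed path in $G\setminus X$ (the subdigraph induced by $V(G)\setminus X$) whose first and last vertices are in $W$ and which uses a vertex outside $W\cup X$. An arboreal decomposition of $G$ is a triple $(T,(W_i)_{i\in V(T)},(A_e)_{e\in E(T)})$ where $T$ is an arborescence, the $W_i$ and $A_e$ are subsets of $V(G)$, $(W_i)_{i\in V(T)}$ is a partition of $V(G)$, and for each arc $e$ of $T$, $W_{\succ e}$ is $A_e$-normal. Its width is $\max_{i\in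 V(T)}|W_i\cup A_{\sim i}|-1$, and the directed treewidth ${\sf dtw}(G)$ is the minimum width of an arboreal decomposition of $G$. *)

theory Defs
  imports Main
begin

text \<open>A digraph is given by a vertex set V and an arc relation E.
  Finite simple: V finite, arcs between vertices of V, no loops
  (multiple arcs are impossible in a relation).\<close>

definition simple_digraph :: "'a set \<Rightarrow> ('a \<times> 'a) set \<Rightarrow> bool" where
  "simple_digraph V E \<longleftrightarrow> finite V \<and> E \<subseteq> V \<times> V \<and> (\<forall>v. (v, v) \<notin> E)"

definition dicycle :: "('a \<times> 'a) set \<Rightarrow> 'a list \<Rightarrow> bool" where
  "dicycle E c \<longleftrightarrow> c \<noteq> [] \<and> distinct c \<and>
     (\<forall>i < length c. (c ! i, c ! ((i + 1) mod length c)) \<in> E)"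

definition circ :: "('a \<times> 'a) set \<Rightarrow> nat" where
  "circ E = (if \<exists>c. dicycle E c then Max {length c | c. dicycle E c} else 1)"

definition dipath :: "('a \<times> 'a) set \<Rightarrow> 'a list \<Rightarrow> bool" where
  "dipath E p \<longleftrightarrow> p \<noteq> [] \<and> distinct p \<and>
     (\<forall>i. Suc i < length p \<longrightarrow> (p ! i, p ! Suc i) \<in> E)"

text \<open>W is X-normal in G = (V,E).  Paths in G \ X are paths of G all of whose
  vertices lie in V - X.\<close>

definition normal :: "'a set \<Rightarrow> ('a \<times> 'a) set \<Rightarrow> 'a set \<Rightarrow> 'a set \<Rightarrow> bool" where
  "normal V E X W \<longleftrightarrow> W \<inter> X = {} \<and>
     \<not> (\<exists>p. dipath E p \<and> set p \<subseteq> V - X \<and> hd p \<in> W \<and> last p \<in> W \<and>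
            (\<exists>v\<in>set p. v \<notin> W \<union> X))"

definition diwalk :: "('b \<times> 'b) set \<Rightarrow> 'b list \<Rightarrow> bool" where
  "diwalk F p \<longleftrightarrow> p \<noteq> [] \<and> (\<forall>i. Suc i < length p \<longrightarrow> (p ! i, p ! Suc i) \<in> F)"

definition arborescence :: "'b set \<Rightarrow> ('b \<times> 'b) set \<Rightarrow> 'b \<Rightarrow> bool" where
  "arborescence N F r \<longleftrightarrow> finite N \<and> F \<subseteq> N \<times> N \<and> acyclic F \<and> r \<in> N \<and>
     {i \<in> N. \<forall>j. (j, i) \<notin> F} = {r} \<and>
     (\<forall>i\<in>N. \<exists>!p. diwalk F p \<and> hd p = r \<and> last p = i)"

text \<open>W_{>e}: union of the bags W_k over nodes k with e \<prec> k, i.e. k equal to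
  the head of e or reachable from it.\<close>

definition W_succ :: "'b set \<Rightarrow> ('b \<times> 'b) set \<Rightarrow> ('b \<Rightarrow> 'a set) \<Rightarrow> 'b \<times> 'b \<Rightarrow> 'a set" where
  "W_succ N F W e = (\<Union>k \<in> {k \<in> N. k = snd e \<or> (snd e, k) \<in> F\<^sup>+}. W k)"

definition A_sim :: "('b \<times> 'b) set \<Rightarrow> ('b \<times> 'b \<Rightarrow> 'a set) \<Rightarrow> 'b \<Rightarrow> 'a set" where
  "A_sim F A i = (\<Union>e \<in> {e \<in> F. fst e = i \<or> snd e = i}. A e)"

definition arboreal_decomposition ::
  "'a set \<Rightarrow> ('a \<times> 'a) set \<Rightarrow> 'b set \<Rightarrow> ('b \<times> 'b) set \<Rightarrow> 'b \<Rightarrow>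
   ('b \<Rightarrow> 'a set) \<Rightarrow> ('b \<times> 'b \<Rightarrow> 'a set) \<Rightarrow> bool" where
  "arboreal_decomposition V E N F r W A \<longleftrightarrow>
     arborescence N F r \<and>
     (\<forall>i\<in>N. W i \<noteq> {} \<and> W i \<subseteq> V) \<and>
     (\<forall>i\<in>N. \<forall>j\<in>N. i \<noteq> j \<longrightarrow> W i \<inter> W j = {}) \<and>
     (\<Union>i\<in>N. W i) = V \<and>
     (\<forall>e\<in>F. A e \<subseteq> V) \<and>
     (\<forall>e\<in>F. normal V E (A e) (W_succ N F W e))"

definition decomp_width :: "'b set \<Rightarrow> ('b \<times> 'b) set \<Rightarrow> ('b \<Rightarrow> 'a set) \<Rightarrow> ('b \<times> 'b \<Rightarrow> 'a set) \<Rightarrow> nat" where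
  "decomp_width N F W A = Max {card (W i \<union> A_sim F A i) | i. i \<in> N} - 1"

text \<open>Directed treewidth: minimum width over all arboreal decompositions; the
  nodes of the arborescence are taken to be natural numbers (w.l.o.g., by relabelling).\<close>

definition dtw :: "'a set \<Rightarrow> ('a \<times> 'a) set \<Rightarrow> nat" where
  "dtw V E = (LEAST w. \<exists>(N :: nat set) F r W A.
      arboreal_decomposition V E N F r W A \<and> decomp_width N F W A = w)"

end

theory Submission
  imports Defs
begin


abbreviation arcs :: "('a \<times> 'a) set \<Rightarrow> 'a list \<Rightarrow> bool" where
  "arcs E xs \<equiv> successively (\<lambda>x y. (x, y) \<in> E) xs"

lemma dipath_iff: "dipath E p \<longleftrightarrow> p \<noteq> [] \<and> distinct p \<and> arcs E p"
  unfolding dipath_def successively_conv_nth by blast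

lemma dicycle_intro:
  assumes "p \<noteq> []" "distinct p" "arcs E p" "(last p, hd p) \<in> E"
  shows "dicycle E p"
  unfolding dicycle_def
proof (intro conjI allI impI)
  fix i assume i: "i < length p"
  show "(p ! i, p ! ((i + 1) mod length p)) \<in> E"
  proof (cases "Suc i < length p")
    case True thus ?thesis using successively_nth[OF assms(3) True] by simp
  next
    case False
    hence "i = length p - 1" using i by simp
    hence "p ! i = last p" "(i + 1) mod length p = 0" using assms(1) i
      by (auto simp: last_conv_nth)
    thus ?thesis using assms(4) assms(1) by (simp add: hd_conv_nth)
  qed
qed (use assms in auto)

lemma circ_ge:
  assumes "simple_digraph V E" "dicycle E c"
  shows "length c \<le> circ E"
proof -
  have b: "length c' \<le> card V" if "dicycle E c'" for c'
  proof -
    have "set c' \<subseteq> V"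
    proof
      fix x assume "x \<in> set c'"
      then obtain i where i: "i < length c'" "x = c' ! i" by (auto simp: in_set_conv_nth)
      hence "(x, c' ! ((i+1) mod length c')) \<in> E" using that unfolding dicycle_def by auto
      thus "x \<in> V" using assms(1) unfolding simple_digraph_def by auto
    qed
    hence "card (set c') \<le> card V" using assms(1) card_mono unfolding simple_digraph_def by blast
    thus ?thesis using that unfolding dicycle_def by (simp add: distinct_card)
  qed
  have "finite {length c | c. dicycle E c}"
    by (rule finite_subset[of _ "{..card V}"]) (auto dest: b)
  thus ?thesis unfolding circ_def using assms(2) by (auto intro: Max_ge)
qed



definition Rp :: "('a \<Rightarrow> 'a option) \<Rightarrow> ('a \<times> 'a) set" where
  "Rp par = {(x, y). par y = Some x}"

definition dfs_forest :: "('a \<times> 'a) set \<Rightarrow> 'a set \<Rightarrow> 'a set \<Rightarrow> ('a \<Rightarrow> nat) \<Rightarrow> ('a \<Rightarrow> 'a option) \<Rightarrow> bool" where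
  "dfs_forest E U S ord par \<longleftrightarrow>
     inj_on ord U \<and> (\<forall>x\<in>U. ord x < card U) \<and>
     (\<forall>y x. par y = Some x \<longrightarrow> x \<in> U \<and> y \<in> U \<and> (x, y) \<in> E \<and> ord x < ord y) \<and>
     (\<forall>y\<in>U. par y = None \<longrightarrow> y \<in> S) \<and>
     (\<forall>x\<in>U. \<forall>y\<in>U. (x, y) \<in> E \<longrightarrow> ord x < ord y \<longrightarrow> (x, y) \<in> (Rp par)\<^sup>+) \<and>
     (\<forall>x w y. w \<in> U \<longrightarrow> (x, y) \<in> (Rp par)\<^sup>+ \<longrightarrow> ord x < ord w \<longrightarrow> ord w < ord y \<longrightarrow> (x, w) \<in> (Rp par)\<^sup>+)"

lemma dfsD:
  assumes "dfs_forest E U S ord par"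
  shows "inj_on ord U" "\<And>x. x \<in> U \<Longrightarrow> ord x < card U"
    "\<And>x y. par y = Some x \<Longrightarrow> x \<in> U \<and> y \<in> U \<and> (x, y) \<in> E \<and> ord x < ord y"
    "\<And>y. y \<in> U \<Longrightarrow> par y = None \<Longrightarrow> y \<in> S"
    "\<And>x y. x \<in> U \<Longrightarrow> y \<in> U \<Longrightarrow> (x, y) \<in> E \<Longrightarrow> ord x < ord y \<Longrightarrow> (x, y) \<in> (Rp par)\<^sup>+"
    "\<And>x w y. w \<in> U \<Longrightarrow> (x, y) \<in> (Rp par)\<^sup>+ \<Longrightarrow> ord x < ord w \<Longrightarrow> ord w < ord y \<Longrightarrow> (x, w) \<in> (Rp par)\<^sup>+"
  using assms unfolding dfs_forest_def by blast+

lemma Rp_trancl: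
  assumes "dfs_forest E U S ord par" "(x, y) \<in> (Rp par)\<^sup>+"
  shows "x \<in> U \<and> y \<in> U \<and> ord x < ord y"
  using assms(2)
proof (induction rule: trancl_induct)
  case (base y) thus ?case using dfsD(3)[OF assms(1)] by (auto simp: Rp_def)
next
  case (step y z) thus ?case using dfsD(3)[OF assms(1), of z y] by (auto simp: Rp_def)
qed

lemma root_anc:
  assumes "dfs_forest E U S ord par" "y \<in> U"
  shows "\<exists>\<rho>. par \<rho> = None \<and> (\<rho>, y) \<in> (Rp par)\<^sup>*"
  using assms(2)
proof (induction "ord y" arbitrary: y rule: less_induct)
  case less
  show ?case
  proof (cases "par y")
    case None thus ?thesis by auto
  next
    case (Some z)
    hence z: "z \<in> U" "ord z < ord y" using dfsD(3)[OF assms(1)] by auto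
    then obtain \<rho> where "par \<rho> = None" "(\<rho>, z) \<in> (Rp par)\<^sup>*" using less by blast
    moreover have "(z, y) \<in> Rp par" using Some by (simp add: Rp_def)
    ultimately show ?thesis by (meson rtrancl.rtrancl_into_rtrancl)
  qed
qed

lemma dfs_empty: "dfs_forest E {} S (\<lambda>_. 0) (\<lambda>_. None)"
  unfolding dfs_forest_def Rp_def by auto

lemma dfs_step:
  assumes f1: "dfs_forest E U1 S1 ord1 par1" and f2: "dfs_forest E U2 S ord2 par2"
    and U: "U = insert r (U1 \<union> U2)" "r \<notin> U1" "r \<notin> U2" "U1 \<inter> U2 = {}" "finite U"
    and S1: "\<And>y. y \<in> S1 \<Longrightarrow> (r, y) \<in> E" and rS: "r \<in> S"
    and closed: "\<And>x y. x \<in> insert r U1 \<Longrightarrow> (x, y) \<in> E \<Longrightarrow> y \<in> U \<Longrightarrow> y \<in> insert r U1"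
  shows "\<exists>ord par. dfs_forest E U S ord par"
proof -
  define ord where "ord x = (if x = r then 0 else if x \<in> U1 then ord1 x + 1 else card U1 + 1 + ord2 x)" for x
  define par where "par x = (if x \<in> U1 then Some (case par1 x of None \<Rightarrow> r | Some y \<Rightarrow> y)
      else if x \<in> U2 then par2 x else None)" for x
  have fin: "finite U1" "finite U2" using U by auto
  have cardU: "card U = Suc (card U1 + card U2)" using U fin by (simp add: card_Un_disjoint)
  have o1: "\<And>x. x \<in> U1 \<Longrightarrow> ord1 x < card U1" and o2: "\<And>x. x \<in> U2 \<Longrightarrow> ord2 x < card U2"
    using dfsD(2)[OF f1] dfsD(2)[OF f2] by auto
  have p1: "\<And>x y. par1 y = Some x \<Longrightarrow> x \<in> U1 \<and> y \<in> U1 \<and> (x, y) \<in> E \<and> ord1 x < ord1 y"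
    using dfsD(3)[OF f1] by blast
  have p2: "\<And>x y. par2 y = Some x \<Longrightarrow> x \<in> U2 \<and> y \<in> U2 \<and> (x, y) \<in> E \<and> ord2 x < ord2 y"
    using dfsD(3)[OF f2] by blast
  have Rp1: "Rp par1 \<subseteq> Rp par" using p1 by (auto simp: Rp_def par_def)
  have Rp2: "Rp par2 \<subseteq> Rp par" using p2 U by (auto simp: Rp_def par_def)
  have dis: "\<And>x. x \<in> U1 \<Longrightarrow> x \<notin> U2" using U by auto
  have RpU: "Rp par = Rp par1 \<union> {(r, y) | y. y \<in> U1 \<and> par1 y = None} \<union> Rp par2"
    using p1 p2 U dis by (auto simp: Rp_def par_def split: option.splits) (metis p1 p2 dis)
  have tr: "(x, y) \<in> (Rp par)\<^sup>+ \<longleftrightarrow>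
      (x, y) \<in> (Rp par1)\<^sup>+ \<or> (x = r \<and> y \<in> U1) \<or> (x, y) \<in> (Rp par2)\<^sup>+" for x y
  proof
    assume "(x, y) \<in> (Rp par)\<^sup>+"
    thus "(x, y) \<in> (Rp par1)\<^sup>+ \<or> (x = r \<and> y \<in> U1) \<or> (x, y) \<in> (Rp par2)\<^sup>+"
    proof (induction rule: trancl_induct)
      case (base y) thus ?case unfolding RpU by auto
    next
      case (step y z)
      have a1: "(y, z) \<in> Rp par1 \<Longrightarrow> y \<in> U1" using p1 by (auto simp: Rp_def)
      have a2: "(y, z) \<in> Rp par2 \<Longrightarrow> y \<in> U2" using p2 by (auto simp: Rp_def)
      have b1: "(x, y) \<in> (Rp par1)\<^sup>+ \<Longrightarrow> y \<in> U1" using Rp_trancl[OF f1] by blast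
      have b2: "(x, y) \<in> (Rp par2)\<^sup>+ \<Longrightarrow> y \<in> U2" using Rp_trancl[OF f2] by blast
      from step.hyps(2) consider "(y, z) \<in> Rp par1" | "y = r" "z \<in> U1" | "(y, z) \<in> Rp par2"
        unfolding RpU by auto
      thus ?case
      proof cases
        case 1 thus ?thesis using step.IH a1 b2 U(4) p1
          by (auto simp: Rp_def intro: trancl_into_trancl)
      next
        case 2 thus ?thesis using step.IH b1 b2 U by auto
      next
        case 3 thus ?thesis using step.IH a2 b1 U(4) by (auto intro: trancl_into_trancl)
      qed
    qed
  next
    assume "(x, y) \<in> (Rp par1)\<^sup>+ \<or> (x = r \<and> y \<in> U1) \<or> (x, y) \<in> (Rp par2)\<^sup>+"
    moreover have "(r, y) \<in> (Rp par)\<^sup>+" if yU1: "y \<in> U1" for y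
    proof -
      obtain \<rho> where rho: "par1 \<rho> = None" "(\<rho>, y) \<in> (Rp par1)\<^sup>*" using root_anc[OF f1 yU1] by blast
      have "\<rho> \<in> U1" using rho yU1 Rp_trancl[OF f1] by (auto dest: rtranclD)
      hence "(r, \<rho>) \<in> Rp par" using rho by (auto simp: Rp_def par_def)
      moreover have "(\<rho>, y) \<in> (Rp par)\<^sup>*" using rho(2) rtrancl_mono[OF Rp1] by blast
      ultimately show ?thesis by auto
    qed
    ultimately show "(x, y) \<in> (Rp par)\<^sup>+" using trancl_mono[OF _ Rp1] trancl_mono[OF _ Rp2] by blast
  qed
  have ordr: "ord r = 0" by (simp add: ord_def)
  have ord1': "\<And>x. x \<in> U1 \<Longrightarrow> ord x = ord1 x + 1" using U by (auto simp: ord_def)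
  have ord2': "\<And>x. x \<in> U2 \<Longrightarrow> ord x = card U1 + 1 + ord2 x" using U by (auto simp: ord_def)
  have t1: "\<And>x y. (x, y) \<in> (Rp par1)\<^sup>+ \<Longrightarrow> x \<in> U1 \<and> y \<in> U1 \<and> ord1 x < ord1 y"
    using Rp_trancl[OF f1] by blast
  have t2: "\<And>x y. (x, y) \<in> (Rp par2)\<^sup>+ \<Longrightarrow> x \<in> U2 \<and> y \<in> U2 \<and> ord2 x < ord2 y"
    using Rp_trancl[OF f2] by blast
  have "dfs_forest E U S ord par"
    unfolding dfs_forest_def
  proof (intro conjI)
    show "inj_on ord U"
    proof (rule inj_onI)
      fix x y assume xy: "x \<in> U" "y \<in> U" "ord x = ord y"
      show "x = y"
        using xy U o1 dis inj_onD[OF dfsD(1)[OF f1]] inj_onD[OF dfsD(1)[OF f2]]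
        by (auto simp: ord_def split: if_splits) (metis add_leD1 leD o1 order_refl)+
    qed
    show "\<forall>x\<in>U. ord x < card U"
    proof
      fix x assume "x \<in> U"
      then consider "x = r" | "x \<in> U1" | "x \<in> U2" using U by auto
      thus "ord x < card U"
      proof cases
        case 1 thus ?thesis using ordr cardU by simp
      next
        case 2 thus ?thesis using o1[of x] ord1'[of x] cardU by simp
      next
        case 3 thus ?thesis using o2[of x] ord2'[of x] cardU by simp
      qed
    qed
    show "\<forall>y x. par y = Some x \<longrightarrow> x \<in> U \<and> y \<in> U \<and> (x, y) \<in> E \<and> ord x < ord y"
    proof (intro allI impI)
      fix y x assume "par y = Some x"
      thus "x \<in> U \<and> y \<in> U \<and> (x, y) \<in> E \<and> ord x < ord y"
        using p1 p2 U S1 dfsD(4)[OF f1] ordr ord1' ord2'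
        by (auto simp: par_def split: if_splits option.splits)
    qed
    show "\<forall>y\<in>U. par y = None \<longrightarrow> y \<in> S"
      using U rS dfsD(4)[OF f2] by (auto simp: par_def)
    show "\<forall>x\<in>U. \<forall>y\<in>U. (x, y) \<in> E \<longrightarrow> ord x < ord y \<longrightarrow> (x, y) \<in> (Rp par)\<^sup>+"
    proof (intro ballI impI)
      fix x y assume x: "x \<in> U" and y: "y \<in> U" and e: "(x, y) \<in> E" and o: "ord x < ord y"
      show "(x, y) \<in> (Rp par)\<^sup>+"
      proof (cases "x \<in> insert r U1")
        case True
        hence yR: "y \<in> insert r U1" using closed e y by blast
        show ?thesis
        proof (cases "x = r")
          case True thus ?thesis using yR o ordr tr by auto
        next
          case False
          hence "x \<in> U1" using \<open>x \<in> insert r U1\<close> by auto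
          moreover have "y \<in> U1" using yR o ordr by auto
          ultimately show ?thesis using dfsD(5)[OF f1, of x y] e o ord1' tr by auto
        qed
      next
        case False
        hence "x \<in> U2" using x U by auto
        moreover have "y \<in> U2"
        proof -
          have "y \<noteq> r" using o ordr by auto
          moreover have "y \<notin> U1" using o o1[of y] ord1'[of y] ord2'[of x] calculation \<open>x \<in> U2\<close> by auto
          ultimately show ?thesis using y U by auto
        qed
        ultimately show ?thesis using dfsD(5)[OF f2, of x y] e o ord2' tr by auto
      qed
    qed
    show "\<forall>x w y. w \<in> U \<longrightarrow> (x, y) \<in> (Rp par)\<^sup>+ \<longrightarrow> ord x < ord w \<longrightarrow> ord w < ord y \<longrightarrow> (x, w) \<in> (Rp par)\<^sup>+"
    proof (intro allI impI)
      fix x w y assume w: "w \<in> U" and xy: "(x, y) \<in> (Rp par)\<^sup>+" and a: "ord x < ord w" "ord w < ord y"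
      from xy consider "(x, y) \<in> (Rp par1)\<^sup>+" | "x = r" "y \<in> U1" | "(x, y) \<in> (Rp par2)\<^sup>+"
        using tr by blast
      thus "(x, w) \<in> (Rp par)\<^sup>+"
      proof cases
        case 1
        with t1 have "x \<in> U1" "y \<in> U1" by auto
        moreover have "w \<in> U1"
        proof -
          have "w \<noteq> r" using a ordr by auto
          moreover have "w \<notin> U2" using a o1[of y] ord1'[of y] ord2'[of w] \<open>y \<in> U1\<close> by auto
          ultimately show ?thesis using w U by auto
        qed
        ultimately show ?thesis using dfsD(6)[OF f1 _ 1] a ord1' tr by auto
      next
        case 2
        have "w \<noteq> r" using a ordr by auto
        moreover have "w \<notin> U2" using a 2 o1[of y] ord1'[of y] ord2'[of w] by auto
        ultimately show ?thesis using w U 2 tr by auto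
      next
        case 3
        with t2 have "x \<in> U2" "y \<in> U2" by auto
        moreover have "w \<in> U2"
        proof -
          have "w \<noteq> r" using a ordr by auto
          moreover have "w \<notin> U1" using a o1[of w] ord1'[of w] ord2'[of x] \<open>x \<in> U2\<close> by auto
          ultimately show ?thesis using w U by auto
        qed
        ultimately show ?thesis using dfsD(6)[OF f2 _ 3] a ord2' tr by auto
      qed
    qed
  qed
  thus ?thesis by blast
qed



lemma dfs_exists:
  assumes "finite U" "\<And>x. x \<in> U \<Longrightarrow> \<exists>s\<in>S \<inter> U. (s, x) \<in> (E \<inter> U \<times> U)\<^sup>*"
  shows "\<exists>ord par. dfs_forest E U S ord par"
  using assms
proof (induction U arbitrary: S rule: finite_psubset_induct)
  case (psubset U)
  show ?case
  proof (cases "U = {}")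
    case True thus ?thesis using dfs_empty by blast
  next
    case False
    then obtain x where "x \<in> U" by auto
    then obtain r where r: "r \<in> S" "r \<in> U" using psubset.prems by blast
    define R where "R = {y. (r, y) \<in> (E \<inter> U \<times> U)\<^sup>*}"
    define U1 where "U1 = R - {r}"
    define U2 where "U2 = U - R"
    have RU: "R \<subseteq> U"
    proof
      fix y assume "y \<in> R"
      hence "(r, y) \<in> (E \<inter> U \<times> U)\<^sup>*" by (simp add: R_def)
      thus "y \<in> U" using r by (induction rule: rtrancl_induct) auto
    qed
    have rR: "r \<in> R" by (simp add: R_def)
    have Rcl: "\<And>y z. y \<in> R \<Longrightarrow> (y, z) \<in> E \<Longrightarrow> z \<in> U \<Longrightarrow> z \<in> R"
      using RU unfolding R_def by (auto intro: rtrancl_into_rtrancl)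
    have ex1: "\<exists>ord par. dfs_forest E U1 {y. (r, y) \<in> E} ord par"
    proof (rule psubset.IH)
      show "U1 \<subset> U" using RU r unfolding U1_def by auto
      fix x assume "x \<in> U1"
      hence x: "(r, x) \<in> (E \<inter> U \<times> U)\<^sup>*" "x \<noteq> r" by (auto simp: U1_def R_def)
      have "\<exists>s. (r, s) \<in> E \<and> s \<in> U1 \<and> (s, x) \<in> (E \<inter> U1 \<times> U1)\<^sup>*"
        using x
      proof (induction rule: rtrancl_induct)
        case base thus ?case by simp
      next
        case (step y z)
        have zU1: "z \<in> U1" using step R_def U1_def by (auto intro: rtrancl_into_rtrancl)
        show ?case
        proof (cases "y = r")
          case True thus ?thesis using step zU1 by auto
        next
          case False
          then obtain s where s: "(r, s) \<in> E" "s \<in> U1" "(s, y) \<in> (E \<inter> U1 \<times> U1)\<^sup>*"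
            using step.IH by blast
          have "y \<in> U1" using step(1) False by (simp add: U1_def R_def)
          hence "(s, z) \<in> (E \<inter> U1 \<times> U1)\<^sup>*" using s(3) zU1 step(2)
            by (auto intro: rtrancl_into_rtrancl)
          thus ?thesis using s by blast
        qed
      qed
      thus "\<exists>s\<in>{y. (r, y) \<in> E} \<inter> U1. (s, x) \<in> (E \<inter> U1 \<times> U1)\<^sup>*" by blast
    qed
    have ex2: "\<exists>ord par. dfs_forest E U2 S ord par"
    proof (rule psubset.IH)
      show "U2 \<subset> U" using rR r unfolding U2_def by auto
      fix x assume "x \<in> U2"
      hence xU: "x \<in> U" "x \<notin> R" by (auto simp: U2_def)
      then obtain s where s: "s \<in> S" "s \<in> U" "(s, x) \<in> (E \<inter> U \<times> U)\<^sup>*" using psubset.prems by blast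
      have sR: "s \<notin> R"
      proof
        assume "s \<in> R"
        hence "(r, x) \<in> (E \<inter> U \<times> U)\<^sup>*" using s(3) by (simp add: R_def)
        thus False using xU by (simp add: R_def)
      qed
      have "(s, x) \<in> (E \<inter> U2 \<times> U2)\<^sup>*" using s(3) xU(2)
      proof (induction rule: rtrancl_induct)
        case base thus ?case by simp
      next
        case (step y z)
        have "y \<notin> R" using step Rcl by blast
        moreover have "y \<in> U" "z \<in> U" using step by auto
        ultimately show ?case using step by (auto simp: U2_def intro: rtrancl_into_rtrancl)
      qed
      thus "\<exists>s\<in>S \<inter> U2. (s, x) \<in> (E \<inter> U2 \<times> U2)\<^sup>*" using s sR by (auto simp: U2_def)
    qed
    obtain ord1 par1 ord2 par2 where f1: "dfs_forest E U1 {y. (r, y) \<in> E} ord1 par1"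
      and f2: "dfs_forest E U2 S ord2 par2" using ex1 ex2 by blast
    show ?thesis
    proof (rule dfs_step[OF f1 f2])
      show "U = insert r (U1 \<union> U2)" using RU rR by (auto simp: U1_def U2_def)
      show "x \<in> insert r U1 \<Longrightarrow> (x, y) \<in> E \<Longrightarrow> y \<in> U \<Longrightarrow> y \<in> insert r U1" for x y
        using Rcl rR by (auto simp: U1_def)
    qed (use r rR psubset.hyps in \<open>auto simp: U1_def U2_def\<close>)
  qed
qed



context
  fixes V :: "'a set" and E :: "('a \<times> 'a) set" and ord :: "'a \<Rightarrow> nat" and par :: "'a \<Rightarrow> 'a option"
    and S :: "'a set"
  assumes sd: "simple_digraph V E" and df: "dfs_forest E V S ord par"
begin

lemma EV: "(x, y) \<in> E \<Longrightarrow> x \<in> V \<and> y \<in> V"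
  using sd unfolding simple_digraph_def by auto

lemma Rp_E: "(x, y) \<in> Rp par \<Longrightarrow> (x, y) \<in> E \<and> ord x < ord y \<and> x \<in> V \<and> y \<in> V"
  using dfsD(3)[OF df] by (auto simp: Rp_def)

lemma rt_ord: assumes "(x, y) \<in> (Rp par)\<^sup>*" shows "ord x \<le> ord y"
  using rtranclD[OF assms] Rp_trancl[OF df, of x y] by auto

lemma tree_path:
  assumes "(x, y) \<in> (Rp par) ^^ n" "x \<in> V"
  shows "\<exists>q. dipath E q \<and> hd q = x \<and> last q = y \<and> length q = Suc n \<and>
            (\<forall>z\<in>set q. (x, z) \<in> (Rp par)\<^sup>* \<and> (z, y) \<in> (Rp par)\<^sup>*)"
  using assms(1)
proof (induction n arbitrary: y)
  case 0 thus ?case by (intro exI[of _ "[x]"]) (auto simp: dipath_iff)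
next
  case (Suc n)
  then obtain z where z: "(x, z) \<in> (Rp par) ^^ n" "(z, y) \<in> Rp par" by (auto elim: relpow_Suc_E)
  then obtain q where q: "dipath E q" "hd q = x" "last q = z" "length q = Suc n"
    "\<forall>w\<in>set q. (x, w) \<in> (Rp par)\<^sup>* \<and> (w, z) \<in> (Rp par)\<^sup>*" using Suc.IH by blast
  have zy: "(z, y) \<in> E" "ord z < ord y" using Rp_E[OF z(2)] by auto
  have ny: "y \<notin> set q"
  proof
    assume "y \<in> set q"
    hence "ord y \<le> ord z" using q(5) rt_ord by blast
    thus False using zy by simp
  qed
  have "dipath E (q @ [y])" using q(1) ny zy(1) q(3) by (auto simp: dipath_iff successively_append_iff)
  moreover have "\<forall>w\<in>set (q @ [y]). (x, w) \<in> (Rp par)\<^sup>* \<and> (w, y) \<in> (Rp par)\<^sup>*"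
    using q(5) z(2) relpow_imp_rtrancl[OF z(1)]
    by (auto intro: rtrancl_into_rtrancl)
  ultimately show ?case using q by (intro exI[of _ "q @ [y]"]) (auto simp: dipath_iff)
qed

lemma lemA:
  assumes "c \<in> V" "(c, d) \<in> (Rp par)\<^sup>*" "(d, z) \<in> E" "(c, z) \<notin> (Rp par)\<^sup>*"
  shows "ord z < ord c"
proof -
  have V: "d \<in> V" "z \<in> V" using EV[OF assms(3)] by auto
  have "d \<noteq> z" using assms by auto
  have "\<not> ord d < ord z"
  proof
    assume "ord d < ord z"
    hence "(d, z) \<in> (Rp par)\<^sup>+" using dfsD(5)[OF df] V assms(3) by blast
    thus False using assms(2,4) by (meson rtrancl_trans trancl_into_rtrancl)
  qed
  hence dz: "ord z < ord d" using inj_onD[OF dfsD(1)[OF df]] V \<open>d \<noteq> z\<close>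
    by (metis linorder_neqE_nat)
  show ?thesis
  proof (rule ccontr)
    assume "\<not> ord z < ord c"
    moreover have "z \<noteq> c" using assms(4) by auto
    ultimately have cz: "ord c < ord z" using inj_onD[OF dfsD(1)[OF df]] V assms(1)
      by (metis linorder_neqE_nat)
    have "c \<noteq> d" using cz dz by auto
    hence "(c, d) \<in> (Rp par)\<^sup>+" using assms(2) by (auto dest: rtranclD)
    hence "(c, z) \<in> (Rp par)\<^sup>+" using dfsD(6)[OF df] V cz dz by blast
    thus False using assms(4) by (meson trancl_into_rtrancl)
  qed
qed

definition L :: "'a \<Rightarrow> 'a set" where
  "L c = {z \<in> V. ord z < ord c \<and> (z, c) \<notin> (Rp par)\<^sup>+}"

lemma lemB:
  assumes "x \<in> L c" "(x, z) \<in> E" "(z, c) \<notin> (Rp par)\<^sup>+" "c \<in> V"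
  shows "z \<in> L c"
proof -
  have V: "x \<in> V" "z \<in> V" using EV[OF assms(2)] by auto
  have x: "ord x < ord c" "(x, c) \<notin> (Rp par)\<^sup>+" using assms(1) by (auto simp: L_def)
  have "x \<noteq> z" using assms sd unfolding simple_digraph_def by auto
  show ?thesis
  proof (cases "ord z < ord x")
    case True thus ?thesis using x V assms(3) by (auto simp: L_def)
  next
    case False
    hence xz: "ord x < ord z" using inj_onD[OF dfsD(1)[OF df]] V \<open>x \<noteq> z\<close>
      by (metis linorder_neqE_nat)
    hence t: "(x, z) \<in> (Rp par)\<^sup>+" using dfsD(5)[OF df] V assms(2) by blast
    have "ord z < ord c"
    proof (rule ccontr)
      assume "\<not> ord z < ord c"
      moreover have "z \<noteq> c" using t x by auto
      ultimately have "ord c < ord z" using inj_onD[OF dfsD(1)[OF df]] V assms(4)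
        by (metis linorder_neqE_nat)
      hence "(x, c) \<in> (Rp par)\<^sup>+" using dfsD(6)[OF df assms(4) t] x by blast
      thus False using x by simp
    qed
    thus ?thesis using V assms(3) by (auto simp: L_def)
  qed
qed

lemma lemC:
  assumes "arcs E w" "w \<noteq> []" "hd w \<in> L c" "\<forall>z\<in>set w. (z, c) \<notin> (Rp par)\<^sup>+" "c \<in> V"
  shows "set w \<subseteq> L c"
  using assms
proof (induction w)
  case Nil thus ?case by simp
next
  case (Cons x w)
  show ?case
  proof (cases "w = []")
    case True thus ?thesis using Cons by simp
  next
    case False
    have "(x, hd w) \<in> E" "arcs E w" using Cons.prems(1) False by (auto simp: successively_Cons)
    hence "hd w \<in> L c" using lemB Cons.prems False by simp
    hence "set w \<subseteq> L c" using Cons.IH Cons.prems False \<open>arcs E w\<close> by simp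
    thus ?thesis using Cons.prems by simp
  qed
qed

definition G :: "'a \<Rightarrow> 'a set" where
  "G c = {a. \<exists>j. 1 \<le> j \<and> j < circ E \<and> (a, c) \<in> (Rp par) ^^ j}"

lemma main_normal:
  assumes c: "c \<in> V" and p: "dipath E p" "set p \<subseteq> V - G c"
    and hd: "(c, hd p) \<in> (Rp par)\<^sup>*" and last: "(c, last p) \<in> (Rp par)\<^sup>*"
    and v: "v \<in> set p" "(c, v) \<notin> (Rp par)\<^sup>*"
  shows False
proof -
  let ?D = "\<lambda>y. (c, y) \<in> (Rp par)\<^sup>*"
  obtain ys x zs where sp: "p = ys @ x # zs" "\<not> ?D x" "\<forall>y\<in>set ys. ?D y"
    using split_list_first_prop[of p "\<lambda>y. \<not> ?D y"] v by blast
  have ysne: "ys \<noteq> []" using sp hd by auto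
  define s where "s = last ys"
  have sD: "?D s" using sp(3) ysne by (simp add: s_def)
  have pd: "distinct p" "arcs E p" using p(1) by (auto simp: dipath_iff)
  have sx: "(s, x) \<in> E" using pd(2) sp(1) ysne by (auto simp: successively_append_iff s_def)
  have ox: "ord x < ord c" using lemA[OF c sD sx sp(2)] .
  have xV: "x \<in> V" using EV[OF sx] by simp
  have arcs_xzs: "arcs E (x # zs)" using pd(2) sp(1) by (simp add: successively_append_iff)
  have "\<exists>z\<in>set (x # zs). (z, c) \<in> (Rp par)\<^sup>+"
  proof (rule ccontr)
    assume na: "\<not> ?thesis"
    hence "x \<in> L c" using ox xV by (auto simp: L_def)
    hence "set (x # zs) \<subseteq> L c" using lemC[OF arcs_xzs _ _ _ c] na by auto
    hence "last p \<in> L c" using sp(1) by (auto simp: last_append)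
    moreover have "ord c \<le> ord (last p)" using rt_ord last by blast
    ultimately show False by (auto simp: L_def)
  qed
  then obtain ms a rest where sp2: "x # zs = ms @ a # rest" "(a, c) \<in> (Rp par)\<^sup>+"
    "\<forall>m\<in>set ms. (m, c) \<notin> (Rp par)\<^sup>+"
    using split_list_first_prop[of "x # zs" "\<lambda>z. (z, c) \<in> (Rp par)\<^sup>+"] by blast
  have pp: "p = (ys @ ms) @ a # rest" using sp(1) sp2(1) by simp
  have msL: "set ms \<subseteq> L c"
  proof (cases "ms = []")
    case True thus ?thesis by simp
  next
    case False
    hence "hd ms = x" using sp2(1) by (cases ms) auto
    moreover have "arcs E ms" using arcs_xzs sp2(1) by (simp add: successively_append_iff)
    ultimately show ?thesis using lemC[OF _ False _ sp2(3) c] ox xV sp2(3) False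
      by (auto simp: L_def)
  qed
  have aV: "a \<in> V" "a \<notin> G c" using p(2) pp by auto
  obtain jj where jj: "jj > 0" "(a, c) \<in> (Rp par) ^^ jj" using sp2(2) by (auto simp: trancl_power)
  have jjk: "circ E \<le> jj"
  proof (rule ccontr)
    assume "\<not> circ E \<le> jj"
    hence "a \<in> G c" using jj unfolding G_def by (auto intro!: exI[of _ jj])
    thus False using aV by simp
  qed
  obtain m where m: "(c, s) \<in> (Rp par) ^^ m" using sD by (auto simp: rtrancl_power)
  have "(a, s) \<in> (Rp par) ^^ (jj + m)" using jj(2) m by (auto simp: relpow_add)
  then obtain tp where tp: "dipath E tp" "hd tp = a" "last tp = s" "length tp = Suc (jj + m)"
    "\<forall>z\<in>set tp. (a, z) \<in> (Rp par)\<^sup>* \<and> (z, s) \<in> (Rp par)\<^sup>*"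
    using tree_path aV(1) by blast
  have disj: "set tp \<inter> set ms = {}"
  proof -
    have "z \<notin> L c" if z: "z \<in> set tp" for z
    proof
      assume zL: "z \<in> L c"
      have zs: "(z, s) \<in> (Rp par)\<^sup>*" using tp(5) z by blast
      have os: "ord c \<le> ord s" using rt_ord sD by blast
      have "z \<noteq> s" using zL os by (auto simp: L_def)
      hence zs': "(z, s) \<in> (Rp par)\<^sup>+" using zs by (auto dest: rtranclD)
      have "(z, c) \<in> (Rp par)\<^sup>+"
      proof (cases "s = c")
        case True thus ?thesis using zs' by simp
      next
        case False
        hence "ord c < ord s" using sD Rp_trancl[OF df] by (auto dest: rtranclD)
        thus ?thesis using dfsD(6)[OF df c zs'] zL by (auto simp: L_def)
      qed
      thus False using zL by (auto simp: L_def)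
    qed
    thus ?thesis using msL by auto
  qed
  define Q where "Q = tp @ ms"
  have tpd: "tp \<noteq> []" "distinct tp" "arcs E tp" using tp(1) by (auto simp: dipath_iff)
  have msd: "distinct ms" using pd(1) pp by auto
  have arcs2: "arcs E (ys @ ms @ [a])"
  proof -
    have pp': "p = (ys @ ms @ [a]) @ rest" using pp by simp
    show ?thesis using pd(2) unfolding pp' successively_append_iff by blast
  qed
  have "arcs E ms" using arcs2 by (simp add: successively_append_iff)
  moreover have "ms \<noteq> [] \<Longrightarrow> (s, hd ms) \<in> E"
    using arcs2 ysne by (auto simp: successively_append_iff s_def)
  ultimately have arcsQ: "arcs E Q" using tpd tp(3) by (auto simp: Q_def successively_append_iff)
  have lastQ: "last Q = last (ys @ ms)" using tp(3) ysne tpd(1) by (auto simp: Q_def s_def last_append)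
  have closing: "(last Q, hd Q) \<in> E"
  proof -
    have "arcs E ((ys @ ms) @ [a])" using arcs2 by simp
    hence "(last (ys @ ms), a) \<in> E" using ysne by (cases "ms = []") (auto simp: successively_append_iff)
    thus ?thesis using lastQ tpd tp(2) by (simp add: Q_def)
  qed
  have "dicycle E Q" using tpd msd disj arcsQ closing by (intro dicycle_intro) (auto simp: Q_def)
  hence "length Q \<le> circ E" using circ_ge[OF sd] by blast
  moreover have "length Q \<ge> Suc (jj + m)" using tp(4) by (simp add: Q_def)
  ultimately show False using jjk by simp
qed

end



lemma diwalk_iff: "diwalk F p \<longleftrightarrow> p \<noteq> [] \<and> arcs F p"
  unfolding diwalk_def successively_conv_nth by blast

context
  fixes V :: "'a set" and E :: "('a \<times> 'a) set" and ord :: "'a \<Rightarrow> nat" and par :: "'a \<Rightarrow> 'a option"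
    and S :: "'a set" and r0 :: 'a
  assumes sd: "simple_digraph V E" and df: "dfs_forest E V S ord par"
    and r0: "r0 \<in> V" "ord r0 = 0"
begin

lemma Gdef: "G E par c = {a. \<exists>j. 1 \<le> j \<and> j < circ E \<and> (a, c) \<in> (Rp par) ^^ j}"
  using G_def[OF sd df] by simp

definition tp :: "'a \<Rightarrow> 'a" where
  "tp i = (case par i of Some x \<Rightarrow> x | None \<Rightarrow> r0)"

definition FF :: "('a \<times> 'a) set" where
  "FF = {(tp i, i) | i. i \<in> V \<and> i \<noteq> r0}"

lemma par_r0: "par r0 = None"
  using dfsD(3)[OF df, of r0] r0 by (cases "par r0") auto

lemma tp_props:
  assumes "i \<in> V" "i \<noteq> r0"
  shows "tp i \<in> V" "ord (tp i) < ord i"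
proof -
  have "ord i \<noteq> 0" using inj_onD[OF dfsD(1)[OF df]] assms r0 by metis
  thus "tp i \<in> V" "ord (tp i) < ord i"
    using dfsD(3)[OF df, of i] r0 by (auto simp: tp_def split: option.splits)
qed

lemma FF_iff: "(j, i) \<in> FF \<longleftrightarrow> i \<in> V \<and> i \<noteq> r0 \<and> j = tp i"
  unfolding FF_def by auto

lemma FF_trancl: "(x, y) \<in> FF\<^sup>+ \<Longrightarrow> ord x < ord y"
proof (induction rule: trancl_induct)
  case (base y) thus ?case using tp_props FF_iff by auto
next
  case (step y z) thus ?case using tp_props[of z] FF_iff by fastforce
qed

lemma Rp_FF: "Rp par \<subseteq> FF"
proof
  fix e assume "e \<in> Rp par"
  then obtain x y where e: "e = (x, y)" "par y = Some x" by (auto simp: Rp_def)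
  hence "y \<in> V" "y \<noteq> r0" using dfsD(3)[OF df] par_r0 by auto
  thus "e \<in> FF" using e by (auto simp: FF_iff tp_def)
qed

lemma FF_Rp:
  assumes "(c, k) \<in> FF\<^sup>+" "c \<noteq> r0"
  shows "(c, k) \<in> (Rp par)\<^sup>+"
  using assms(1)
proof (induction rule: trancl_induct)
  case (base y)
  hence "par y = Some c" using assms(2) by (auto simp: FF_iff tp_def split: option.splits)
  thus ?case by (auto simp: Rp_def)
next
  case (step y z)
  have "par y \<noteq> None" using step.IH by (auto dest: tranclD2 simp: Rp_def)
  hence "y \<noteq> r0" using par_r0 by auto
  hence "par z = Some y" using step.hyps(2) \<open>par y \<noteq> None\<close>
    by (auto simp: FF_iff tp_def split: option.splits)
  thus ?case using step.IH by (auto simp: Rp_def intro: trancl_into_trancl)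
qed

lemma walk_exists: "i \<in> V \<Longrightarrow> \<exists>p. diwalk FF p \<and> hd p = r0 \<and> last p = i"
proof (induction "ord i" arbitrary: i rule: less_induct)
  case less
  show ?case
  proof (cases "i = r0")
    case True thus ?thesis by (intro exI[of _ "[r0]"]) (auto simp: diwalk_iff)
  next
    case False
    then obtain p where p: "diwalk FF p" "hd p = r0" "last p = tp i"
      using less tp_props[OF less.prems False] by blast
    have "(tp i, i) \<in> FF" using less.prems False by (simp add: FF_iff)
    hence "diwalk FF (p @ [i])" using p by (auto simp: diwalk_iff successively_append_iff)
    thus ?thesis using p by (intro exI[of _ "p @ [i]"]) (auto simp: diwalk_iff)
  qed
qed

lemma walk_unique:
  "diwalk FF p \<Longrightarrow> hd p = r0 \<Longrightarrow> diwalk FF q \<Longrightarrow> hd q = r0 \<Longrightarrow> last p = last q \<Longrightarrow> p = q"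
proof (induction p arbitrary: q rule: rev_induct)
  case Nil thus ?case by (simp add: diwalk_iff)
next
  case (snoc x p')
  obtain q' y where q: "q = q' @ [y]" using snoc.prems(3) by (metis diwalk_iff rev_exhaust)
  have xy: "x = y" using snoc.prems(5) q by simp
  show ?case
  proof (cases "p' = []")
    case True
    hence "x = r0" using snoc.prems(2) by simp
    have "q' = []"
    proof (rule ccontr)
      assume "q' \<noteq> []"
      hence "(last q', y) \<in> FF" using snoc.prems(3) q by (auto simp: diwalk_iff successively_append_iff)
      thus False using xy \<open>x = r0\<close> by (simp add: FF_iff)
    qed
    thus ?thesis using True q xy by simp
  next
    case False
    have px: "(last p', x) \<in> FF" "arcs FF p'" using snoc.prems(1) False
      by (auto simp: diwalk_iff successively_append_iff)
    hence xr: "x \<noteq> r0" "last p' = tp x" by (auto simp: FF_iff)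
    have q'ne: "q' \<noteq> []" using q xy xr snoc.prems(4) by auto
    have qx: "(last q', x) \<in> FF" "arcs FF q'" using snoc.prems(3) q q'ne xy
      by (auto simp: diwalk_iff successively_append_iff)
    have "p' = q'"
      using snoc.IH[of q'] px qx False q'ne snoc.prems(2,4) q xr
      by (auto simp: diwalk_iff FF_iff)
    thus ?thesis using q xy by simp
  qed
qed

lemma arb: "arborescence V FF r0"
  unfolding arborescence_def
proof (intro conjI ballI)
  show "finite V" using sd by (simp add: simple_digraph_def)
  show "FF \<subseteq> V \<times> V" using tp_props by (auto simp: FF_def)
  show "acyclic FF" unfolding acyclic_def using FF_trancl by blast
  show "r0 \<in> V" by (rule r0)
  show "{i \<in> V. \<forall>j. (j, i) \<notin> FF} = {r0}" using r0 by (auto simp: FF_iff)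
  fix i assume "i \<in> V"
  thus "\<exists>!p. diwalk FF p \<and> hd p = r0 \<and> last p = i"
    using walk_exists walk_unique by metis
qed

abbreviation AA :: "'a \<times> 'a \<Rightarrow> 'a set" where
  "AA e \<equiv> G E par (snd e)"

lemma G_V: "G E par c \<subseteq> V"
proof
  fix a assume "a \<in> G E par c"
  then obtain j where "j \<ge> 1" "(a, c) \<in> (Rp par) ^^ j" by (auto simp: Gdef)
  hence "(a, c) \<in> (Rp par)\<^sup>+" unfolding trancl_power by (metis One_nat_def Suc_le_eq)
  thus "a \<in> V" using Rp_trancl[OF df] by blast
qed

lemma relpow_uniq: "(a, c) \<in> (Rp par) ^^ j \<Longrightarrow> (b, c) \<in> (Rp par) ^^ j \<Longrightarrow> a = b"
proof (induction j arbitrary: c)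
  case 0 thus ?case by simp
next
  case (Suc j)
  obtain z where z: "(a, z) \<in> (Rp par) ^^ j" "(z, c) \<in> Rp par" using Suc.prems(1) by (auto elim: relpow_Suc_E)
  obtain z' where z': "(b, z') \<in> (Rp par) ^^ j" "(z', c) \<in> Rp par" using Suc.prems(2) by (auto elim: relpow_Suc_E)
  have "z = z'" using z(2) z'(2) by (auto simp: Rp_def)
  thus ?case using Suc.IH z z' by blast
qed

lemma card_G: "card (G E par c) \<le> circ E"
proof -
  define f where "f j = (SOME a. (a, c) \<in> (Rp par) ^^ j)" for j
  have "G E par c \<subseteq> f ` {1..<circ E}"
  proof
    fix a assume "a \<in> G E par c"
    then obtain j where j: "1 \<le> j" "j < circ E" "(a, c) \<in> (Rp par) ^^ j" by (auto simp: Gdef)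
    hence "(f j, c) \<in> (Rp par) ^^ j" unfolding f_def by (metis someI)
    hence "a = f j" using relpow_uniq j(3) by blast
    thus "a \<in> f ` {1..<circ E}" using j by auto
  qed
  hence "card (G E par c) \<le> card (f ` {1..<circ E})" by (intro card_mono) auto
  also have "\<dots> \<le> card {1..<circ E}" by (rule card_image_le) auto
  finally show ?thesis by simp
qed

lemma G_child:
  assumes "i \<in> V" "i \<noteq> r0"
  shows "G E par i \<subseteq> insert (tp i) (G E par (tp i))"
proof
  fix a assume "a \<in> G E par i"
  then obtain j where j: "1 \<le> j" "j < circ E" "(a, i) \<in> (Rp par) ^^ j" by (auto simp: Gdef)
  then obtain j' where j': "j = Suc j'" by (cases j) auto
  then obtain z where z: "(a, z) \<in> (Rp par) ^^ j'" "(z, i) \<in> Rp par" using j(3) by (auto elim: relpow_Suc_E)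
  have "tp i = z" using z(2) by (auto simp: Rp_def tp_def)
  show "a \<in> insert (tp i) (G E par (tp i))"
  proof (cases "j' = 0")
    case True thus ?thesis using z \<open>tp i = z\<close> by simp
  next
    case False thus ?thesis using z \<open>tp i = z\<close> j j' unfolding Gdef by auto
  qed
qed

lemma bag_card:
  assumes "c \<in> V"
  shows "card ({c} \<union> A_sim FF AA c) \<le> Suc (circ E)"
proof -
  have "A_sim FF AA c \<subseteq> insert c (G E par c)"
  proof
    fix a assume "a \<in> A_sim FF AA c"
    then obtain b where b: "(tp b, b) \<in> FF" "tp b = c \<or> b = c" "a \<in> G E par b"
      unfolding A_sim_def by (auto simp: FF_def)
    show "a \<in> insert c (G E par c)"
    proof (cases "b = c")
      case True thus ?thesis using b by simp
    next
      case False
      hence "tp b = c" using b by simp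
      thus ?thesis using G_child[of b] b by (auto simp: FF_iff)
    qed
  qed
  hence "{c} \<union> A_sim FF AA c \<subseteq> insert c (G E par c)" by auto
  moreover have "finite (G E par c)" using G_V sd finite_subset unfolding simple_digraph_def by metis
  ultimately have "card ({c} \<union> A_sim FF AA c) \<le> card (insert c (G E par c))" by (intro card_mono) auto
  also have "\<dots> \<le> Suc (card (G E par c))" by (rule card_insert_le_m1) auto
  finally show ?thesis using card_G[of c] by simp
qed

lemma W_succ_eq:
  assumes "c \<in> V" "c \<noteq> r0"
  shows "W_succ V FF (\<lambda>i. {i}) (tp c, c) = {y. (c, y) \<in> (Rp par)\<^sup>*}"
proof -
  have "(c, y) \<in> FF\<^sup>+ \<longleftrightarrow> (c, y) \<in> (Rp par)\<^sup>+" for y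
    using FF_Rp[of c y] assms trancl_mono[OF _ Rp_FF] by blast
  moreover have "(c, y) \<in> (Rp par)\<^sup>+ \<Longrightarrow> y \<in> V" for y using Rp_trancl[OF df] by blast
  ultimately show ?thesis unfolding W_succ_def using assms
    by (auto dest: rtranclD)
qed

lemma decomp:
  "arboreal_decomposition V E V FF r0 (\<lambda>i. {i}) AA"
  unfolding arboreal_decomposition_def
proof (intro conjI ballI)
  show "arborescence V FF r0" by (rule arb)
  show "\<And>i. i \<in> V \<Longrightarrow> {i} \<noteq> {}" by simp
  show "\<And>i. i \<in> V \<Longrightarrow> {i} \<subseteq> V" by simp
  show "\<And>i j. i \<in> V \<Longrightarrow> j \<in> V \<Longrightarrow> i \<noteq> j \<longrightarrow> {i} \<inter> {j} = {}" by simp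
  show "(\<Union>i\<in>V. {i}) = V" by simp
  show "\<And>e. e \<in> FF \<Longrightarrow> AA e \<subseteq> V" using G_V by simp
  fix e assume "e \<in> FF"
  then obtain c where c: "e = (tp c, c)" "c \<in> V" "c \<noteq> r0" by (auto simp: FF_def)
  show "normal V E (AA e) (W_succ V FF (\<lambda>i. {i}) e)"
    unfolding normal_def c(1) W_succ_eq[OF c(2,3)] snd_conv
  proof (intro conjI notI)
    show "{y. (c, y) \<in> (Rp par)\<^sup>*} \<inter> G E par c = {}"
    proof -
      have "ord a < ord c" if "a \<in> G E par c" for a
      proof -
        from that obtain j where "j \<ge> 1" "(a, c) \<in> (Rp par) ^^ j" by (auto simp: Gdef)
        hence "(a, c) \<in> (Rp par)\<^sup>+" unfolding trancl_power by (metis One_nat_def Suc_le_eq)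
        thus ?thesis using Rp_trancl[OF df] by blast
      qed
      thus ?thesis using rt_ord[OF sd df] by force
    qed
  next
    assume "\<exists>p. dipath E p \<and> set p \<subseteq> V - G E par c \<and> hd p \<in> {y. (c, y) \<in> (Rp par)\<^sup>*} \<and>
       last p \<in> {y. (c, y) \<in> (Rp par)\<^sup>*} \<and> (\<exists>v\<in>set p. v \<notin> {y. (c, y) \<in> (Rp par)\<^sup>*} \<union> G E par c)"
    then obtain p v where "dipath E p" "set p \<subseteq> V - G E par c" "(c, hd p) \<in> (Rp par)\<^sup>*"
      "(c, last p) \<in> (Rp par)\<^sup>*" "v \<in> set p" "(c, v) \<notin> (Rp par)\<^sup>*" by auto
    thus False using main_normal[OF sd df c(2)] by blast
  qed
qed

lemma decomp_ex: "\<exists>F A. arboreal_decomposition V E V F r0 (\<lambda>i. {i}) A \<and>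
   (\<forall>c\<in>V. card ({c} \<union> A_sim F A c) \<le> Suc (circ E))"
  using decomp bag_card by blast

end



lemma arcs_subset: "arcs F p \<Longrightarrow> F \<subseteq> N \<times> N \<Longrightarrow> p \<noteq> [] \<Longrightarrow> hd p \<in> N \<Longrightarrow> set p \<subseteq> N"
proof (induction p)
  case Nil thus ?case by simp
next
  case (Cons x p)
  show ?case
  proof (cases "p = []")
    case True thus ?thesis using Cons by simp
  next
    case False
    hence "(x, hd p) \<in> F" "arcs F p" using Cons.prems(1) by (auto simp: successively_Cons)
    hence "hd p \<in> N" using Cons.prems(2) by auto
    thus ?thesis using Cons False \<open>arcs F p\<close> by simp
  qed
qed

lemma rename:
  fixes h :: "'b \<Rightarrow> nat"
  assumes ad: "arboreal_decomposition V E N F r W A" and inj: "inj_on h N"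
    and bound: "\<forall>i\<in>N. card (W i \<union> A_sim F A i) \<le> B"
  shows "\<exists>(N' :: nat set) F' r' W' A'. arboreal_decomposition V E N' F' r' W' A' \<and>
           (\<forall>i\<in>N'. card (W' i \<union> A_sim F' A' i) \<le> B)"
proof -
  define g where "g = inv_into N h"
  define F' where "F' = (\<lambda>(a, b). (h a, h b)) ` F"
  define W' where "W' i = W (g i)" for i
  define A' where "A' e = A (g (fst e), g (snd e))" for e
  have arb: "arborescence N F r" using ad by (simp add: arboreal_decomposition_def)
  have FN: "F \<subseteq> N \<times> N" using arb by (simp add: arborescence_def)
  have gh: "\<And>x. x \<in> N \<Longrightarrow> g (h x) = x" using inj by (simp add: g_def)
  have hg: "\<And>y. y \<in> h ` N \<Longrightarrow> h (g y) = y" by (simp add: g_def f_inv_into_f)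
  have gN: "\<And>y. y \<in> h ` N \<Longrightarrow> g y \<in> N" by (simp add: g_def inv_into_into)
  have F'_iff: "(u, v) \<in> F' \<longleftrightarrow> u \<in> h ` N \<and> v \<in> h ` N \<and> (g u, g v) \<in> F" for u v
  proof
    assume "(u, v) \<in> F'"
    then obtain a b where "(a, b) \<in> F" "u = h a" "v = h b" by (auto simp: F'_def)
    thus "u \<in> h ` N \<and> v \<in> h ` N \<and> (g u, g v) \<in> F" using FN gh by auto
  next
    assume "u \<in> h ` N \<and> v \<in> h ` N \<and> (g u, g v) \<in> F"
    thus "(u, v) \<in> F'" using hg unfolding F'_def by (auto intro!: image_eqI[of _ _ "(g u, g v)"])
  qed
  have F'N: "F' \<subseteq> h ` N \<times> h ` N" using F'_iff by auto
  have T1: "(x, y) \<in> F\<^sup>+ \<Longrightarrow> (h x, h y) \<in> F'\<^sup>+" for x y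
  proof (induction rule: trancl_induct)
    case (base y) thus ?case by (auto simp: F'_def intro: r_into_trancl)
  next
    case (step y z) thus ?case by (auto simp: F'_def intro: trancl_into_trancl)
  qed
  have T2: "(u, v) \<in> F'\<^sup>+ \<Longrightarrow> (g u, g v) \<in> F\<^sup>+ \<and> u \<in> h ` N \<and> v \<in> h ` N" for u v
  proof (induction rule: trancl_induct)
    case (base y) thus ?case using F'_iff by auto
  next
    case (step y z) thus ?case using F'_iff by (auto intro: trancl_into_trancl)
  qed
  have src: "(\<forall>j. (j, h x) \<notin> F') \<longleftrightarrow> (\<forall>j. (j, x) \<notin> F)" if "x \<in> N" for x
  proof
    assume a: "\<forall>j. (j, h x) \<notin> F'"
    show "\<forall>j. (j, x) \<notin> F"
    proof (intro allI notI)
      fix j assume "(j, x) \<in> F"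
      hence "(h j, h x) \<in> F'" by (auto simp: F'_def)
      thus False using a by blast
    qed
  next
    assume a: "\<forall>j. (j, x) \<notin> F"
    show "\<forall>j. (j, h x) \<notin> F'" using a F'_iff gh that by auto
  qed
  have arb': "arborescence (h ` N) F' (h r)"
    unfolding arborescence_def
  proof (intro conjI ballI)
    show "finite (h ` N)" using arb by (simp add: arborescence_def)
    show "F' \<subseteq> h ` N \<times> h ` N" by (rule F'N)
    show "acyclic F'"
      unfolding acyclic_def using T2 arb by (auto simp: arborescence_def acyclic_def)
    show "h r \<in> h ` N" using arb by (simp add: arborescence_def)
    have s0: "{i \<in> N. \<forall>j. (j, i) \<notin> F} = {r}" using arb by (simp add: arborescence_def)
    show "{i \<in> h ` N. \<forall>j. (j, i) \<notin> F'} = {h r}"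
    proof
      show "{i \<in> h ` N. \<forall>j. (j, i) \<notin> F'} \<subseteq> {h r}"
      proof
        fix k assume "k \<in> {i \<in> h ` N. \<forall>j. (j, i) \<notin> F'}"
        then obtain x where x: "x \<in> N" "k = h x" "\<forall>j. (j, h x) \<notin> F'" by auto
        hence "\<forall>j. (j, x) \<notin> F" using src by blast
        hence "x \<in> {i \<in> N. \<forall>j. (j, i) \<notin> F}" using x by simp
        hence "x = r" using s0 by blast
        thus "k \<in> {h r}" using x by simp
      qed
      show "{h r} \<subseteq> {i \<in> h ` N. \<forall>j. (j, i) \<notin> F'}" using src s0 by auto
    qed
    fix i' assume "i' \<in> h ` N"
    then obtain i where i: "i \<in> N" "i' = h i" by auto
    obtain p where p: "diwalk F p" "hd p = r" "last p = i"
      and pu: "\<And>q. diwalk F q \<and> hd q = r \<and> last q = i \<Longrightarrow> q = p"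
      using arb i(1) unfolding arborescence_def by metis
    have rN: "r \<in> N" using arb by (simp add: arborescence_def)
    have pN: "set p \<subseteq> N" using arcs_subset[OF _ FN] p rN by (auto simp: diwalk_iff)
    show "\<exists>!q. diwalk F' q \<and> hd q = h r \<and> last q = i'"
    proof
      have "arcs F' (map h p)" using p(1) pN unfolding diwalk_iff successively_map
        by (auto simp: F'_def elim!: successively_mono)
      thus "diwalk F' (map h p) \<and> hd (map h p) = h r \<and> last (map h p) = i'"
        using p i by (auto simp: diwalk_iff hd_map last_map)
    next
      fix q assume q: "diwalk F' q \<and> hd q = h r \<and> last q = i'"
      have qN: "set q \<subseteq> h ` N" using arcs_subset[OF _ F'N] q rN by (auto simp: diwalk_iff)
      have "arcs F (map g q)" using q qN unfolding diwalk_iff successively_map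
        by (auto simp: F'_iff elim!: successively_mono)
      hence "diwalk F (map g q) \<and> hd (map g q) = r \<and> last (map g q) = i"
        using q i gh rN by (auto simp: diwalk_iff hd_map last_map)
      hence "map g q = p" using pu by blast
      hence "map h (map g q) = map h p" by simp
      moreover have "map h (map g q) = q" using qN hg by (induction q) auto
      ultimately show "q = map h p" by simp
    qed
  qed
  have Wsucc: "W_succ (h ` N) F' W' (h a, h b) = W_succ N F W (a, b)" if "b \<in> N" for a b
  proof -
    have "{k \<in> h ` N. k = h b \<or> (h b, k) \<in> F'\<^sup>+} = h ` {k \<in> N. k = b \<or> (b, k) \<in> F\<^sup>+}"
    proof
      show "{k \<in> h ` N. k = h b \<or> (h b, k) \<in> F'\<^sup>+} \<subseteq> h ` {k \<in> N. k = b \<or> (b, k) \<in> F\<^sup>+}"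
      proof
        fix k assume "k \<in> {k \<in> h ` N. k = h b \<or> (h b, k) \<in> F'\<^sup>+}"
        then obtain x where x: "x \<in> N" "k = h x" "k = h b \<or> (h b, k) \<in> F'\<^sup>+" by auto
        hence "x = b \<or> (b, x) \<in> F\<^sup>+" using T2[of "h b" "h x"] gh that inj_onD[OF inj] by auto
        thus "k \<in> h ` {k \<in> N. k = b \<or> (b, k) \<in> F\<^sup>+}" using x by auto
      qed
      show "h ` {k \<in> N. k = b \<or> (b, k) \<in> F\<^sup>+} \<subseteq> {k \<in> h ` N. k = h b \<or> (h b, k) \<in> F'\<^sup>+}"
        using T1 by auto
    qed
    thus ?thesis unfolding W_succ_def W'_def using gh by (simp add: snd_def)
  qed
  have Asim: "A_sim F' A' (h i) = A_sim F A i" if "i \<in> N" for i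
  proof -
    have "{e \<in> F'. fst e = h i \<or> snd e = h i} = (\<lambda>(a, b). (h a, h b)) ` {e \<in> F. fst e = i \<or> snd e = i}"
      using FN that inj_onD[OF inj] unfolding F'_def by (fastforce simp: image_iff)
    moreover have "A' ((\<lambda>(a, b). (h a, h b)) e) = A e" if "e \<in> F" for e
      using that FN gh unfolding A'_def by (auto split: prod.splits)
    ultimately show ?thesis unfolding A_sim_def by auto
  qed
  have ad': "arboreal_decomposition V E (h ` N) F' (h r) W' A'"
    unfolding arboreal_decomposition_def
  proof (intro conjI)
    show "arborescence (h ` N) F' (h r)" by (rule arb')
    show "\<forall>i\<in>h ` N. W' i \<noteq> {} \<and> W' i \<subseteq> V"
      using ad gN by (auto simp: arboreal_decomposition_def W'_def)
    show "\<forall>i\<in>h ` N. \<forall>j\<in>h ` N. i \<noteq> j \<longrightarrow> W' i \<inter> W' j = {}"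
      using ad gN hg unfolding arboreal_decomposition_def W'_def by metis
    have "(\<Union>i\<in>h ` N. W' i) = (\<Union>i\<in>N. W i)" using gh by (simp add: W'_def)
    thus "(\<Union>i\<in>h ` N. W' i) = V" using ad by (simp add: arboreal_decomposition_def)
    have "A' e \<subseteq> V \<and> normal V E (A' e) (W_succ (h ` N) F' W' e)" if "e \<in> F'" for e
    proof -
    from that obtain a b where ab: "(a, b) \<in> F" "e = (h a, h b)" by (auto simp: F'_def)
    hence abN: "a \<in> N" "b \<in> N" using FN by auto
    have Ae: "A' e = A (a, b)" using ab abN gh by (simp add: A'_def)
    show ?thesis using ad ab Ae Wsucc[OF abN(2)] by (auto simp: arboreal_decomposition_def)
    qed
    thus "\<forall>e\<in>F'. A' e \<subseteq> V" "\<forall>e\<in>F'. normal V E (A' e) (W_succ (h ` N) F' W' e)" by auto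
  qed
  moreover have "\<forall>i\<in>h ` N. card (W' i \<union> A_sim F' A' i) \<le> B"
    using bound Asim gh by (auto simp: W'_def)
  ultimately show ?thesis by blast
qed

theorem mainTheorem1:
  fixes V :: "'a set" and E :: "('a \<times> 'a) set"
  assumes "simple_digraph V E" and "V \<noteq> {}"
  shows "dtw V E \<le> circ E + 1"
proof -
  have finV: "finite V" using assms(1) by (simp add: simple_digraph_def)
  obtain ord par where df: "dfs_forest E V V ord par"
    using dfs_exists[OF finV, of V E] by blast
  have inj: "inj_on ord V" using dfsD(1)[OF df] .
  have "ord ` V = {0..<card V}"
  proof (rule card_subset_eq)
    show "ord ` V \<subseteq> {0..<card V}" using dfsD(2)[OF df] by auto
    show "card (ord ` V) = card {0..<card V}" using card_image[OF inj] by simp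
  qed simp
  moreover have "0 < card V" using assms finV by (simp add: card_gt_0_iff)
  ultimately obtain r0 where r0: "r0 \<in> V" "ord r0 = 0" by (metis atLeastLessThan_iff imageE le0)
  obtain F A where FA: "arboreal_decomposition V E V F r0 (\<lambda>i. {i}) A"
    "\<forall>c\<in>V. card ({c} \<union> A_sim F A c) \<le> Suc (circ E)"
    using decomp_ex[OF assms(1) df r0] by blast
  obtain N' F' r' W' A' where d': "arboreal_decomposition V E (N' :: nat set) F' r' W' A'"
    "\<forall>i\<in>N'. card (W' i \<union> A_sim F' A' i) \<le> Suc (circ E)"
    using rename[OF FA(1) inj, of "Suc (circ E)"] FA(2) by auto
  have arb: "finite N'" "r' \<in> N'" using d'(1) by (auto simp: arboreal_decomposition_def arborescence_def)
  have "Max {card (W' i \<union> A_sim F' A' i) | i. i \<in> N'} \<le> Suc (circ E)"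
  proof (rule Max.boundedI)
    show "finite {card (W' i \<union> A_sim F' A' i) | i. i \<in> N'}" using arb by simp
    show "{card (W' i \<union> A_sim F' A' i) | i. i \<in> N'} \<noteq> {}" using arb by auto
  qed (use d'(2) in auto)
  hence w: "decomp_width N' F' W' A' \<le> circ E + 1" unfolding decomp_width_def by simp
  have "dtw V E \<le> decomp_width N' F' W' A'"
    unfolding dtw_def using d'(1) by (intro Least_le) blast
  thus ?thesis using w by simp
qed

end
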